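(* Let $G=(V,E)$ be a finite cavity-monotone network. As a function of $t\in(0,\infty)$, the energy $U(G;t)$ is non-decreasing, tends to $0$ as $t\to0$ and to $M(G)$ as $t\to\infty$. More precisely, $$\forall t>0,\quad U(G;t)\le t\sum_{ij\in E}A(\mu_i)A(\mu_j),$$ $$\forall t>1,\quad U(G;t)\ge M(G)-\frac{1}{\log t}\Big(|E|\log 2+\sum_{i\in V}\log A(\mu_i)\Big),$$ where for a measure $\mu$, $A(\mu)=\max\mu/\min\mu$ with $\max\mu=\max\{\mu(F):\mu(F)>0\}$ and $\min\mu=\min\{\mu(F):\mu(F)>0\}$.
   Context: Measures over subsets: for a finite set $E$, a measure is $\mu:2^E\to[0,\infty)$. For $\mathbf w\in(0,\infty)^E$, $\mathbb P^{\mathbf w}_\mu(\mathcal F=F)=\mu(F)\prod_{e\in F}w_e/\sum_{F'}\mu(F')\prod_{e\in F'}w_e$. $\mu$ is Rayleigh if for all $\mathbf w\in(0,\infty)^E$, $e\neq f$: $\mathbb P^{\mathbf w}_\mu(e,f\in\mathcal F)\le\mathbb P^{\mathbf w}_\mu(e\in\mathcal F)\mathbb P^{\mathbf w}_\mu(f\in\mathcal F)$; size-increasing if for all $\mathbf w\in(0,\infty)^E$, $e\in E$: $\mathbb E^{\mathbf w}_\mu[|\mathcal F|\mathbf 1_{e\in\mathcal F}]>\mathbb E^{\mathbf w}_\mu|\mathcal F|\,\mathbb P^{\mathbf w}_\mu(e\in\mathcal F)$; cavity-monotone if $\mu(\emptyset)>0$, Rayleigh and size-increasing. Networks: a finite network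 is a finite simple graph $G=(V,E)$ with, for each $i\in V$, a local measure $\mu_i$ over the subsets of $E_i$ (edges incident to $i$); cavity-monotone if every $\mu_i$ is. Global measure $\mu(F)=\prod_{i}\mu_i(F\cap E_i)$; $Z(G;t)=\sum_{F\subseteq E}\mu(F)t^{|F|}$; Gibbs–Boltzmann law $\mathbb P^t_G(\mathcal F=F)=\mu(F)t^{|F|}/Z(G;t)$; energy $U(G;t)=\mathbb E^t_G|\mathcal F|$; $M(G)=\max\{|F|:\mu(F)>0\}$. *)

theory Defs
  imports "HOL-Analysis.Analysis"
begin

definition is_measure :: "'a set \<Rightarrow> ('a set \<Rightarrow> real) \<Rightarrow> bool" where
  "is_measure S \<mu> \<longleftrightarrow> finite S \<and> (\<forall>F. F \<subseteq> S \<longrightarrow> \<mu> F \<ge> 0)"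

definition wZ :: "'a set \<Rightarrow> ('a set \<Rightarrow> real) \<Rightarrow> ('a \<Rightarrow> real) \<Rightarrow> real" where
  "wZ S \<mu> w = (\<Sum>F\<in>Pow S. \<mu> F * (\<Prod>e\<in>F. w e))"

definition wProb :: "'a set \<Rightarrow> ('a set \<Rightarrow> real) \<Rightarrow> ('a \<Rightarrow> real) \<Rightarrow> ('a set \<Rightarrow> bool) \<Rightarrow> real" where
  "wProb S \<mu> w P = (\<Sum>F\<in>{F\<in>Pow S. P F}. \<mu> F * (\<Prod>e\<in>F. w e)) / wZ S \<mu> w"

definition wExp :: "'a set \<Rightarrow> ('a set \<Rightarrow> real) \<Rightarrow> ('a \<Rightarrow> real) \<Rightarrow> ('a set \<Rightarrow> real) \<Rightarrow> real" where
  "wExp S \<mu> w X = (\<Sum>F\<in>Pow S. X F * \<mu> F * (\<Prod>e\<in>F. w e)) / wZ S \<mu> w"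

definition rayleigh :: "'a set \<Rightarrow> ('a set \<Rightarrow> real) \<Rightarrow> bool" where
  "rayleigh S \<mu> \<longleftrightarrow> (\<forall>w. (\<forall>e\<in>S. w e > 0) \<longrightarrow>
     (\<forall>e\<in>S. \<forall>f\<in>S. e \<noteq> f \<longrightarrow>
        wProb S \<mu> w (\<lambda>F. e \<in> F \<and> f \<in> F) \<le> wProb S \<mu> w (\<lambda>F. e \<in> F) * wProb S \<mu> w (\<lambda>F. f \<in> F)))"

definition size_increasing :: "'a set \<Rightarrow> ('a set \<Rightarrow> real) \<Rightarrow> bool" where
  "size_increasing S \<mu> \<longleftrightarrow> (\<forall>w. (\<forall>e\<in>S. w e > 0) \<longrightarrow>
     (\<forall>e\<in>S. wExp S \<mu> w (\<lambda>F. real (card F) * (if e \<in> F then 1 else 0))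
              > wExp S \<mu> w (\<lambda>F. real (card F)) * wProb S \<mu> w (\<lambda>F. e \<in> F)))"

definition cavity_monotone :: "'a set \<Rightarrow> ('a set \<Rightarrow> real) \<Rightarrow> bool" where
  "cavity_monotone S \<mu> \<longleftrightarrow> \<mu> {} > 0 \<and> rayleigh S \<mu> \<and> size_increasing S \<mu>"

definition max_meas :: "'a set \<Rightarrow> ('a set \<Rightarrow> real) \<Rightarrow> real" where
  "max_meas S \<mu> = Max {\<mu> F | F. F \<subseteq> S \<and> \<mu> F > 0}"

definition min_meas :: "'a set \<Rightarrow> ('a set \<Rightarrow> real) \<Rightarrow> real" where
  "min_meas S \<mu> = Min {\<mu> F | F. F \<subseteq> S \<and> \<mu> F > 0}"

definition Ameas :: "'a set \<Rightarrow> ('a set \<Rightarrow> real) \<Rightarrow> real" where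
  "Ameas S \<mu> = max_meas S \<mu> / min_meas S \<mu>"

definition simple_graph :: "'v set \<Rightarrow> 'v set set \<Rightarrow> bool" where
  "simple_graph V E \<longleftrightarrow> finite V \<and> (\<forall>e\<in>E. e \<subseteq> V \<and> card e = 2)"

definition inc_edges :: "'v set set \<Rightarrow> 'v \<Rightarrow> 'v set set" where
  "inc_edges E i = {e \<in> E. i \<in> e}"

definition network :: "'v set \<Rightarrow> 'v set set \<Rightarrow> ('v \<Rightarrow> 'v set set \<Rightarrow> real) \<Rightarrow> bool" where
  "network V E \<mu> \<longleftrightarrow> simple_graph V E \<and> (\<forall>i\<in>V. is_measure (inc_edges E i) (\<mu> i))"

definition cavity_monotone_network :: "'v set \<Rightarrow> 'v set set \<Rightarrow> ('v \<Rightarrow> 'v set set \<Rightarrow> real) \<Rightarrow> bool" where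
  "cavity_monotone_network V E \<mu> \<longleftrightarrow> network V E \<mu> \<and>
     (\<forall>i\<in>V. cavity_monotone (inc_edges E i) (\<mu> i))"

definition global_meas :: "'v set \<Rightarrow> 'v set set \<Rightarrow> ('v \<Rightarrow> 'v set set \<Rightarrow> real) \<Rightarrow> 'v set set \<Rightarrow> real" where
  "global_meas V E \<mu> F = (\<Prod>i\<in>V. \<mu> i (F \<inter> inc_edges E i))"

definition partition_fn :: "'v set \<Rightarrow> 'v set set \<Rightarrow> ('v \<Rightarrow> 'v set set \<Rightarrow> real) \<Rightarrow> real \<Rightarrow> real" where
  "partition_fn V E \<mu> t = (\<Sum>F\<in>Pow E. global_meas V E \<mu> F * t ^ card F)"

definition energy :: "'v set \<Rightarrow> 'v set set \<Rightarrow> ('v \<Rightarrow> 'v set set \<Rightarrow> real) \<Rightarrow> real \<Rightarrow> real" where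
  "energy V E \<mu> t = (\<Sum>F\<in>Pow E. real (card F) * (global_meas V E \<mu> F * t ^ card F / partition_fn V E \<mu> t))"

definition max_size :: "'v set \<Rightarrow> 'v set set \<Rightarrow> ('v \<Rightarrow> 'v set set \<Rightarrow> real) \<Rightarrow> nat" where
  "max_size V E \<mu> = Max {card F | F. F \<subseteq> E \<and> global_meas V E \<mu> F > 0}"

end

theory Submission
  imports Defs
begin


lemma prod_powr_weights:
  fixes s :: real and K :: nat
  assumes "s > 0" "finite R"
  shows "(\<Prod>g\<in>R. s powr (if g \<in> B then - real K else 1))
       = s powr (real (card (R - B)) - real K * real (card (R \<inter> B)))"
proof -
  have "(\<Prod>g\<in>R. s powr (if g \<in> B then - real K else 1)) = s powr (\<Sum>g\<in>R. (if g \<in> B then - real K else 1))"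
    using assms by (simp add: powr_sum)
  also have "(\<Sum>g\<in>R. (if g \<in> B then - real K else 1)) = real (card (R - B)) - real K * real (card (R \<inter> B))"
  proof -
    have "(\<Sum>g\<in>R. (if g \<in> B then - real K else (1::real))) = (\<Sum>g\<in>R \<inter> B. - real K) + (\<Sum>g\<in>R - B. 1)"
      using assms(2) by (simp add: sum.If_cases Diff_eq)
    then show ?thesis by simp
  qed
  finally show ?thesis .
qed



lemma term_exp_bound:
  fixes K :: nat
  assumes "finite B" "de \<le> K"
    and "B \<subseteq> F \<Longrightarrow> de \<le> card (F - B)"
  shows "real de - real K * real (card B) \<le> real (card (F - B)) - real K * real (card (F \<inter> B))"
proof (cases "B \<subseteq> F")
  case True
  then have "F \<inter> B = B" by auto
  then show ?thesis using assms(3)[OF True] by simp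
next
  case False
  then have "F \<inter> B \<subset> B" by auto
  then have "card (F \<inter> B) < card B" using assms(1) by (simp add: psubset_card_mono)
  then have "card (F \<inter> B) + 1 \<le> card B" by simp
  then have "K * (card (F \<inter> B) + 1) \<le> K * card B" using mult_le_mono2 by blast
  then have "real K * real (card (F \<inter> B)) + real K \<le> real K * real (card B)"
    by (metis (mono_tags) distrib_left mult.right_neutral of_nat_add of_nat_le_iff of_nat_mult)
  then show ?thesis using assms(2) by simp
qed

lemma core:
  assumes meas: "is_measure X \<mu>" and ray: "rayleigh X \<mu>" and e0: "\<mu> {} > 0"
    and BX: "B \<subseteq> X" and muB: "\<mu> B > 0"
    and e: "e \<in> X - B" and f: "f \<in> X - B" and ef: "e \<noteq> f"
    and de: "\<And>R. B \<union> {e} \<subseteq> R \<Longrightarrow> R \<subseteq> X \<Longrightarrow> \<mu> R > 0 \<Longrightarrow> de \<le> card (R - B)"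
    and df: "\<And>R. B \<union> {f} \<subseteq> R \<Longrightarrow> R \<subseteq> X \<Longrightarrow> \<mu> R > 0 \<Longrightarrow> df \<le> card (R - B)"
    and Ref: "B \<union> {e,f} \<subseteq> Ref" "Ref \<subseteq> X" "\<mu> Ref > 0"
    and lt: "card (Ref - B) < de + df"
  shows False
proof -
  have finX: "finite X" and nn: "\<And>F. F \<subseteq> X \<Longrightarrow> \<mu> F \<ge> 0" using meas by (auto simp: is_measure_def)
  have finB: "finite B" using finX BX finite_subset by blast
  define K where "K = de + df"
  define D where "D = real K * real (card B)"
  define T where "T = (\<Sum>F\<in>Pow X. \<mu> F)"
  have "\<mu> {} \<le> T" unfolding T_def
    by (rule member_le_sum) (use finX nn in auto)
  then have Tpos: "T > 0" using e0 by linarith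
  define c where "c = \<mu> Ref * \<mu> B"
  have cpos: "c > 0" using Ref muB by (simp add: c_def)
  define s where "s = min 1 (c / (2 * T^2))"
  have spos: "s > 0" using cpos Tpos by (simp add: s_def)
  have sle1: "s \<le> 1" by (simp add: s_def)
  have sle: "s \<le> c / (2 * T^2)" by (simp add: s_def)
  define h where "h = (\<lambda>g. if g \<in> B then - real K else (1::real))"
  define w where "w = (\<lambda>g. s powr h g)"
  define x where "x = (\<lambda>R. real (card (R - B)) - real K * real (card (R \<inter> B)))"
  have wpos: "\<forall>g\<in>X. w g > 0" using spos by (simp add: w_def)
  have pw: "\<And>R. R \<subseteq> X \<Longrightarrow> (\<Prod>g\<in>R. w g) = s powr x R"
    unfolding w_def h_def x_def using prod_powr_weights[OF spos] finX finite_subset by blast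
  define Z where "Z = wZ X \<mu> w"
  define Nef where "Nef = (\<Sum>F\<in>{F\<in>Pow X. e \<in> F \<and> f \<in> F}. \<mu> F * (\<Prod>g\<in>F. w g))"
  define Ne where "Ne = (\<Sum>F\<in>{F\<in>Pow X. e \<in> F}. \<mu> F * (\<Prod>g\<in>F. w g))"
  define Nf where "Nf = (\<Sum>F\<in>{F\<in>Pow X. f \<in> F}. \<mu> F * (\<Prod>g\<in>F. w g))"
  have termnn: "\<And>F. F \<in> Pow X \<Longrightarrow> 0 \<le> \<mu> F * (\<Prod>g\<in>F. w g)"
  proof -
    fix F assume "F \<in> Pow X"
    then have "0 \<le> \<mu> F" using nn by blast
    moreover have "0 \<le> (\<Prod>g\<in>F. w g)" by (simp add: w_def prod_nonneg)
    ultimately show "0 \<le> \<mu> F * (\<Prod>g\<in>F. w g)" by simp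
  qed
  have Zlow: "\<mu> B * s powr (- D) \<le> Z"
  proof -
    have "\<mu> B * (\<Prod>g\<in>B. w g) \<le> Z" unfolding Z_def wZ_def
      by (rule member_le_sum[where f = "\<lambda>F. \<mu> F * (\<Prod>g\<in>F. w g)"]) (use BX finX termnn in auto)
    moreover have "x B = - D" by (simp add: x_def D_def)
    ultimately show ?thesis using pw[OF BX] by simp
  qed
  have Zpos: "Z > 0"
    using Zlow muB spos by (smt (verit) mult_pos_pos powr_gt_zero)
  have Neflow: "\<mu> Ref * s powr (real (card (Ref - B)) - D) \<le> Nef"
  proof -
    have "\<mu> Ref * (\<Prod>g\<in>Ref. w g) \<le> Nef" unfolding Nef_def
      by (rule member_le_sum[where f = "\<lambda>F. \<mu> F * (\<Prod>g\<in>F. w g)"]) (use Ref finX termnn in auto)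
    moreover have "Ref \<inter> B = B" using Ref by auto
    then have "x Ref = real (card (Ref - B)) - D" by (simp add: x_def D_def)
    ultimately show ?thesis using pw[OF Ref(2)] by simp
  qed
  have upper: "(\<Sum>F\<in>{F\<in>Pow X. a \<in> F}. \<mu> F * (\<Prod>g\<in>F. w g)) \<le> T * s powr (real d - D)"
    if a: "a \<in> X - B" and dK: "d \<le> K"
      and da: "\<And>R. B \<union> {a} \<subseteq> R \<Longrightarrow> R \<subseteq> X \<Longrightarrow> \<mu> R > 0 \<Longrightarrow> d \<le> card (R - B)" for a d
  proof -
    have "(\<Sum>F\<in>{F\<in>Pow X. a \<in> F}. \<mu> F * (\<Prod>g\<in>F. w g)) \<le> (\<Sum>F\<in>{F\<in>Pow X. a \<in> F}. \<mu> F * s powr (real d - D))"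
    proof (rule sum_mono)
      fix F assume F: "F \<in> {F\<in>Pow X. a \<in> F}"
      show "\<mu> F * (\<Prod>g\<in>F. w g) \<le> \<mu> F * s powr (real d - D)"
      proof (cases "\<mu> F > 0")
        case True
        have FX: "F \<subseteq> X" "a \<in> F" using F by auto
        have "real d - D \<le> x F" unfolding x_def D_def
        proof (rule term_exp_bound[OF finB dK])
          assume "B \<subseteq> F" then show "d \<le> card (F - B)" using da[of F] FX True by blast
        qed
        then have "s powr x F \<le> s powr (real d - D)" by (rule powr_mono') (use spos sle1 in auto)
        moreover have "prod w F = s powr x F" using pw FX by blast
        ultimately show ?thesis using True by (metis less_imp_le mult_left_mono)
      next
        case False
        have "0 \<le> \<mu> F" using nn F by blast
        then have "\<mu> F = 0" using False by linarith
        then show ?thesis by simp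
      qed
    qed
    also have "\<dots> \<le> (\<Sum>F\<in>Pow X. \<mu> F * s powr (real d - D))"
      by (rule sum_mono2) (use finX nn in auto)
    also have "\<dots> = T * s powr (real d - D)" by (simp add: T_def sum_distrib_right)
    finally show ?thesis .
  qed
  have Neup: "Ne \<le> T * s powr (real de - D)" unfolding Ne_def
    by (rule upper) (use e de in \<open>auto simp: K_def\<close>)
  have Nfup: "Nf \<le> T * s powr (real df - D)" unfolding Nf_def
    by (rule upper) (use f df in \<open>auto simp: K_def\<close>)
  have Ne0: "Ne \<ge> 0" unfolding Ne_def by (rule sum_nonneg) (use termnn in auto)
  have Nf0: "Nf \<ge> 0" unfolding Nf_def by (rule sum_nonneg) (use termnn in auto)
  have "wProb X \<mu> w (\<lambda>F. e \<in> F \<and> f \<in> F) \<le> wProb X \<mu> w (\<lambda>F. e \<in> F) * wProb X \<mu> w (\<lambda>F. f \<in> F)"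
    using ray wpos e f ef unfolding rayleigh_def by blast
  then have "Nef / Z \<le> (Ne / Z) * (Nf / Z)"
    unfolding wProb_def Nef_def Ne_def Nf_def Z_def by simp
  then have ray2: "Nef * Z \<le> Ne * Nf" using Zpos
    by (simp add: field_simps power2_eq_square)
  define a where "a = real (card (Ref - B))"
  have "c * s powr (a - 2 * D) = (\<mu> Ref * s powr (a - D)) * (\<mu> B * s powr (- D))"
    by (simp add: c_def powr_add[symmetric] algebra_simps)
  also have "\<dots> \<le> Nef * Z"
  proof (rule mult_mono)
    show "\<mu> Ref * s powr (a - D) \<le> Nef" using Neflow by (simp add: a_def)
    show "\<mu> B * s powr - D \<le> Z" by (rule Zlow)
    show "0 \<le> Nef" unfolding Nef_def by (rule sum_nonneg) (use termnn in auto)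
    show "0 \<le> \<mu> B * s powr - D" using muB by simp
  qed
  also have "\<dots> \<le> Ne * Nf" by (rule ray2)
  also have "\<dots> \<le> (T * s powr (real de - D)) * (T * s powr (real df - D))"
    using Neup Nfup Ne0 Nf0 Tpos by (intro mult_mono) auto
  also have "\<dots> = T^2 * (s powr (real de + real df - a) * s powr (a - 2 * D))"
    by (simp add: power2_eq_square powr_add[symmetric] algebra_simps)
  also have "\<dots> \<le> T^2 * (s * s powr (a - 2 * D))"
  proof -
    have "1 \<le> real de + real df - a" using lt by (simp add: a_def)
    then have "s powr (real de + real df - a) \<le> s powr 1" by (rule powr_mono') (use spos sle1 in auto)
    then have "s powr (real de + real df - a) \<le> s" using spos by simp
    then show ?thesis by (intro mult_left_mono mult_right_mono) auto
  qed
  finally have "c * s powr (a - 2 * D) \<le> (T^2 * s) * s powr (a - 2 * D)" by simp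
  then have "c \<le> T^2 * s" using spos by simp
  also have "\<dots> \<le> T^2 * (c / (2 * T^2))" using sle by (intro mult_left_mono) auto
  also have "\<dots> = c / 2" using Tpos by simp
  finally show False using cpos by simp
qed

lemma dc_step:
  assumes meas: "is_measure X \<mu>" and ray: "rayleigh X \<mu>" and e0: "\<mu> {} > 0"
    and BS: "B \<subseteq> S" and SX: "S \<subseteq> X" and muB: "\<mu> B > 0" and muS: "\<mu> S > 0"
    and g: "g \<in> S - B"
  shows "\<mu> (insert g B) > 0"
proof -
  have finX: "finite X" using meas by (auto simp: is_measure_def)
  define P where "P = (\<lambda>R. B \<union> {g} \<subseteq> R \<and> R \<subseteq> X \<and> \<mu> R > 0)"
  have PS: "P S" using BS SX muS g by (auto simp: P_def)
  define R0 where "R0 = arg_min (\<lambda>R. card (R - B)) P"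
  have R0: "P R0" and R0min: "\<And>R. P R \<Longrightarrow> card (R0 - B) \<le> card (R - B)"
    using arg_min_nat_lemma[of P S "\<lambda>R. card (R - B)"] PS unfolding R0_def by auto
  show ?thesis
  proof (cases "R0 = insert g B")
    case True then show ?thesis using R0 by (simp add: P_def)
  next
    case False
    then obtain f where f: "f \<in> R0" "f \<notin> B" "f \<noteq> g" using R0 unfolding P_def by auto
    show ?thesis
    proof (rule ccontr, rule core[OF meas ray e0, of B g f "card (R0 - B)" 1 R0])
      show "B \<subseteq> X" using BS SX by auto
      show "0 < \<mu> B" by (rule muB)
      show "g \<in> X - B" using g SX by auto
      show "f \<in> X - B" using f R0 by (auto simp: P_def)
      show "g \<noteq> f" using f by auto
      show "\<And>R. B \<union> {g} \<subseteq> R \<Longrightarrow> R \<subseteq> X \<Longrightarrow> 0 < \<mu> R \<Longrightarrow> card (R0 - B) \<le> card (R - B)"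
        using R0min by (auto simp: P_def)
      show "\<And>R. B \<union> {f} \<subseteq> R \<Longrightarrow> R \<subseteq> X \<Longrightarrow> 0 < \<mu> R \<Longrightarrow> 1 \<le> card (R - B)"
      proof -
        fix R assume "B \<union> {f} \<subseteq> R" "R \<subseteq> X"
        then have "f \<in> R - B" "finite (R - B)" using f finX finite_subset by auto
        then show "1 \<le> card (R - B)" by (metis One_nat_def Suc_leI card_gt_0_iff empty_iff)
      qed
      show "B \<union> {g, f} \<subseteq> R0" using R0 f by (auto simp: P_def)
      show "R0 \<subseteq> X" "0 < \<mu> R0" using R0 by (auto simp: P_def)
      show "card (R0 - B) < card (R0 - B) + 1" by simp
    qed
  qed
qed

lemma dc_between:
  assumes meas: "is_measure X \<mu>" and ray: "rayleigh X \<mu>" and e0: "\<mu> {} > 0"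
    and SX: "S \<subseteq> X" and muS: "\<mu> S > 0"
  shows "card (C - B) = n \<Longrightarrow> B \<subseteq> C \<Longrightarrow> C \<subseteq> S \<Longrightarrow> \<mu> B > 0 \<Longrightarrow> \<mu> C > 0"
proof (induction n arbitrary: B)
  case 0
  have "finite X" using meas by (simp add: is_measure_def)
  moreover have "C \<subseteq> X" using SX 0 by auto
  ultimately have "finite C" using finite_subset by blast
  then have "C - B = {}" using 0(1) by simp
  then have "C = B" using 0(2) by blast
  then show ?case using 0(4) by simp
next
  case (Suc n)
  have "finite X" using meas by (simp add: is_measure_def)
  moreover have "C \<subseteq> X" using SX Suc(4) by auto
  ultimately have finC: "finite C" using finite_subset by blast
  have "C - B \<noteq> {}" using Suc(2) by (metis card.empty nat.distinct(1))
  then obtain g where g: "g \<in> C - B" by blast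
  have pos: "\<mu> (insert g B) > 0"
  proof (rule dc_step[OF meas ray e0 _ SX Suc(5) muS])
    show "B \<subseteq> S" using Suc(3,4) by (rule order_trans)
    show "g \<in> S - B" using Suc(4) g by blast
  qed
  have "C - insert g B = (C - B) - {g}" by blast
  then have "card (C - insert g B) = n" using Suc(2) g finC by (simp add: card_Diff_singleton)
  moreover have "insert g B \<subseteq> C" using g Suc(3) by blast
  ultimately show ?case using Suc.IH Suc(4) pos by blast
qed

lemma dc:
  assumes "is_measure X \<mu>" "rayleigh X \<mu>" "\<mu> {} > 0" "S \<subseteq> X" "\<mu> S > 0" "C \<subseteq> S"
  shows "\<mu> C > 0"
  using dc_between[OF assms(1-5), of C "{}" "card C"] assms by auto



lemma pow_diff_sign:
  fixes s t :: real and m n :: nat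
  assumes "0 < s" "s \<le> t"
  shows "0 \<le> (real n - real m) * (s ^ m * t ^ n - s ^ n * t ^ m)"
proof (cases "m \<le> n")
  case True
  have "s ^ (n - m) \<le> t ^ (n - m)" using assms by (intro power_mono) auto
  then have "s ^ m * t ^ m * s ^ (n - m) \<le> s ^ m * t ^ m * t ^ (n - m)"
    using assms by (intro mult_left_mono) auto
  then have "s ^ n * t ^ m \<le> s ^ m * t ^ n" using True
    by (metis (no_types, lifting) le_add_diff_inverse mult.assoc mult.commute power_add)
  then show ?thesis using True by (intro mult_nonneg_nonneg) auto
next
  case False
  then have le: "n \<le> m" by simp
  have "s ^ (m - n) \<le> t ^ (m - n)" using assms by (intro power_mono) auto
  then have "s ^ n * t ^ n * s ^ (m - n) \<le> s ^ n * t ^ n * t ^ (m - n)"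
    using assms by (intro mult_left_mono) auto
  then have "s ^ m * t ^ n \<le> s ^ n * t ^ m" using le
    by (metis (no_types, lifting) le_add_diff_inverse mult.assoc mult.commute power_add)
  then show ?thesis using le by (intro mult_nonpos_nonpos) auto
qed

lemma ratio_mono:
  fixes g :: "'x \<Rightarrow> real" and c :: "'x \<Rightarrow> nat" and s t :: real
  assumes fin: "finite I" and gnn: "\<And>F. F \<in> I \<Longrightarrow> g F \<ge> 0" and st: "0 < s" "s \<le> t"
    and Zs: "(\<Sum>F\<in>I. g F * s ^ c F) > 0" and Zt: "(\<Sum>F\<in>I. g F * t ^ c F) > 0"
  shows "(\<Sum>F\<in>I. real (c F) * (g F * s ^ c F)) / (\<Sum>F\<in>I. g F * s ^ c F)
       \<le> (\<Sum>F\<in>I. real (c F) * (g F * t ^ c F)) / (\<Sum>F\<in>I. g F * t ^ c F)"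
proof -
  define h where "h = (\<lambda>F G. g F * g G * (real (c G) - real (c F)) * (s ^ c F * t ^ c G))"
  have S1: "(\<Sum>F\<in>I. real (c F) * (g F * t ^ c F)) * (\<Sum>F\<in>I. g F * s ^ c F)
          - (\<Sum>F\<in>I. real (c F) * (g F * s ^ c F)) * (\<Sum>F\<in>I. g F * t ^ c F)
          = (\<Sum>F\<in>I. \<Sum>G\<in>I. h F G)"
  proof -
    have a: "(\<Sum>F\<in>I. real (c F) * (g F * t ^ c F)) * (\<Sum>F\<in>I. g F * s ^ c F)
        = (\<Sum>F\<in>I. \<Sum>G\<in>I. g F * s ^ c F * (real (c G) * (g G * t ^ c G)))"
      by (simp add: sum_product mult.commute)
    have b: "(\<Sum>F\<in>I. real (c F) * (g F * s ^ c F)) * (\<Sum>F\<in>I. g F * t ^ c F)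
        = (\<Sum>F\<in>I. \<Sum>G\<in>I. real (c F) * (g F * s ^ c F) * (g G * t ^ c G))"
      by (simp add: sum_product)
    show ?thesis unfolding a b h_def
      by (simp add: sum_subtractf[symmetric] algebra_simps)
  qed
  have swap: "(\<Sum>F\<in>I. \<Sum>G\<in>I. h F G) = (\<Sum>F\<in>I. \<Sum>G\<in>I. h G F)"
    by (rule sum.swap)
  have "0 \<le> (\<Sum>F\<in>I. \<Sum>G\<in>I. h F G + h G F)"
  proof (intro sum_nonneg)
    fix F G assume "F \<in> I" "G \<in> I"
    have "h F G + h G F = (g F * g G) * ((real (c G) - real (c F)) * (s ^ c F * t ^ c G - s ^ c G * t ^ c F))"
      by (simp add: h_def algebra_simps)
    also have "\<dots> \<ge> 0"
    proof (rule mult_nonneg_nonneg)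
      show "0 \<le> g F * g G" using gnn \<open>F \<in> I\<close> \<open>G \<in> I\<close> by simp
      show "0 \<le> (real (c G) - real (c F)) * (s ^ c F * t ^ c G - s ^ c G * t ^ c F)"
        by (rule pow_diff_sign[OF st])
    qed
    finally show "0 \<le> h F G + h G F" .
  qed
  also have "\<dots> = 2 * (\<Sum>F\<in>I. \<Sum>G\<in>I. h F G)"
    using swap by (simp add: sum.distrib)
  finally have "0 \<le> (\<Sum>F\<in>I. \<Sum>G\<in>I. h F G)" by simp
  then have "(\<Sum>F\<in>I. real (c F) * (g F * s ^ c F)) * (\<Sum>F\<in>I. g F * t ^ c F)
     \<le> (\<Sum>F\<in>I. real (c F) * (g F * t ^ c F)) * (\<Sum>F\<in>I. g F * s ^ c F)" using S1 by simp
  then show ?thesis using Zs Zt by (simp add: divide_le_eq le_divide_eq mult.commute mult.left_commute)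
qed



context
  fixes V :: "'v set" and E :: "'v set set" and \<mu> :: "'v \<Rightarrow> 'v set set \<Rightarrow> real"
  assumes cm: "cavity_monotone_network V E \<mu>"
begin

lemma finV: "finite V" using cm by (simp add: cavity_monotone_network_def network_def simple_graph_def)

lemma eV: "e \<in> E \<Longrightarrow> e \<subseteq> V" using cm by (simp add: cavity_monotone_network_def network_def simple_graph_def)

lemma finE: "finite E"
proof -
  have "E \<subseteq> Pow V" using eV by auto
  then show ?thesis using finV by (meson finite_Pow_iff finite_subset)
qed

lemma loc_meas: "i \<in> V \<Longrightarrow> is_measure (inc_edges E i) (\<mu> i)"
  using cm by (simp add: cavity_monotone_network_def network_def)

lemma loc_cm: "i \<in> V \<Longrightarrow> cavity_monotone (inc_edges E i) (\<mu> i)"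
  using cm by (simp add: cavity_monotone_network_def)

lemma loc_nn: "i \<in> V \<Longrightarrow> S \<subseteq> inc_edges E i \<Longrightarrow> \<mu> i S \<ge> 0"
  using loc_meas by (simp add: is_measure_def)

lemma loc_empty: "i \<in> V \<Longrightarrow> \<mu> i {} > 0"
  using loc_cm by (simp add: cavity_monotone_def)

lemma loc_dc: "i \<in> V \<Longrightarrow> S \<subseteq> inc_edges E i \<Longrightarrow> \<mu> i S > 0 \<Longrightarrow> C \<subseteq> S \<Longrightarrow> \<mu> i C > 0"
  using dc[OF loc_meas _ loc_empty] loc_cm by (auto simp: cavity_monotone_def)

lemma loc_fin: "finite {\<mu> i F |F. F \<subseteq> inc_edges E i \<and> \<mu> i F > 0}"
proof -
  have "{\<mu> i F |F. F \<subseteq> inc_edges E i \<and> \<mu> i F > 0} \<subseteq> \<mu> i ` Pow (inc_edges E i)" by auto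
  moreover have "finite (inc_edges E i)" using finE by (simp add: inc_edges_def)
  ultimately show ?thesis by (meson finite_Pow_iff finite_imageI finite_subset)
qed

lemma loc_bounds:
  assumes "i \<in> V" "S \<subseteq> inc_edges E i" "\<mu> i S > 0"
  shows "min_meas (inc_edges E i) (\<mu> i) \<le> \<mu> i S" "\<mu> i S \<le> max_meas (inc_edges E i) (\<mu> i)"
  using assms loc_fin unfolding min_meas_def max_meas_def
  by (auto intro!: Min_le Max_ge)

lemma loc_min_pos: "i \<in> V \<Longrightarrow> min_meas (inc_edges E i) (\<mu> i) > 0"
proof -
  assume i: "i \<in> V"
  have ne: "{\<mu> i F |F. F \<subseteq> inc_edges E i \<and> \<mu> i F > 0} \<noteq> {}" using loc_empty[OF i] by blast
  have "min_meas (inc_edges E i) (\<mu> i) \<in> {\<mu> i F |F. F \<subseteq> inc_edges E i \<and> \<mu> i F > 0}"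
    unfolding min_meas_def by (rule Min_in[OF loc_fin ne])
  then show ?thesis by auto
qed

lemma loc_max_pos: "i \<in> V \<Longrightarrow> max_meas (inc_edges E i) (\<mu> i) > 0"
  using loc_bounds[of i "{}"] loc_empty loc_min_pos by fastforce

lemma loc_A_pos: "i \<in> V \<Longrightarrow> Ameas (inc_edges E i) (\<mu> i) > 0"
  using loc_min_pos loc_max_pos by (simp add: Ameas_def)

lemma loc_ratio:
  assumes i: "i \<in> V" and S: "S \<subseteq> inc_edges E i" and e: "e \<in> inc_edges E i"
  shows "\<mu> i (insert e S) \<le> Ameas (inc_edges E i) (\<mu> i) * \<mu> i S"
proof (cases "\<mu> i (insert e S) > 0")
  case True
  have pos: "\<mu> i S > 0" by (rule loc_dc[OF i _ True]) (use S e in auto)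
  have "\<mu> i (insert e S) \<le> max_meas (inc_edges E i) (\<mu> i)"
    by (rule loc_bounds(2)[OF i _ True]) (use S e in auto)
  also have "\<dots> = Ameas (inc_edges E i) (\<mu> i) * min_meas (inc_edges E i) (\<mu> i)"
    using loc_min_pos[OF i] by (simp add: Ameas_def)
  also have "\<dots> \<le> Ameas (inc_edges E i) (\<mu> i) * \<mu> i S"
    using loc_bounds(1)[OF i S pos] loc_A_pos[OF i] by (intro mult_left_mono) auto
  finally show ?thesis .
next
  case False
  then show ?thesis using loc_A_pos[OF i] loc_nn[OF i S] by (smt (verit) mult_nonneg_nonneg)
qed

lemma gm_nn: "global_meas V E \<mu> F \<ge> 0"
  unfolding global_meas_def by (rule prod_nonneg) (auto intro: loc_nn)

lemma gm_empty: "global_meas V E \<mu> {} > 0"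
  unfolding global_meas_def by (rule prod_pos) (auto intro: loc_empty)

lemma Z_pos: "t > 0 \<Longrightarrow> partition_fn V E \<mu> t > 0"
proof -
  assume t: "t > 0"
  have fin: "finite (Pow E)" using finE by simp
  have "partition_fn V E \<mu> t = global_meas V E \<mu> {} * t ^ card ({}::'v set set)
      + (\<Sum>F\<in>Pow E - {{}}. global_meas V E \<mu> F * t ^ card F)"
    unfolding partition_fn_def by (rule sum.remove[OF fin]) simp
  moreover have "(\<Sum>F\<in>Pow E - {{}}. global_meas V E \<mu> F * t ^ card F) \<ge> 0"
    using gm_nn t by (intro sum_nonneg) simp
  ultimately show ?thesis using gm_empty by simp
qed

lemma gm_step:
  assumes e: "e \<in> E" and F: "F \<subseteq> E" "e \<in> F"
  shows "global_meas V E \<mu> F \<le> (\<Prod>i\<in>e. Ameas (inc_edges E i) (\<mu> i)) * global_meas V E \<mu> (F - {e})"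
proof -
  define c where "c = (\<lambda>k. if k \<in> e then Ameas (inc_edges E k) (\<mu> k) else 1)"
  have le: "\<mu> k (F \<inter> inc_edges E k) \<le> c k * \<mu> k ((F - {e}) \<inter> inc_edges E k)" if k: "k \<in> V" for k
  proof (cases "k \<in> e")
    case True
    then have "F \<inter> inc_edges E k = insert e ((F - {e}) \<inter> inc_edges E k)"
      using e F by (auto simp: inc_edges_def)
    moreover have "e \<in> inc_edges E k" using True e by (simp add: inc_edges_def)
    ultimately show ?thesis using loc_ratio[OF k, of "(F - {e}) \<inter> inc_edges E k" e] True
      by (simp add: c_def)
  next
    case False
    then have "F \<inter> inc_edges E k = (F - {e}) \<inter> inc_edges E k"
      by (auto simp: inc_edges_def)
    then show ?thesis using False by (simp add: c_def)
  qed
  have "global_meas V E \<mu> F \<le> (\<Prod>k\<in>V. c k * \<mu> k ((F - {e}) \<inter> inc_edges E k))"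
    unfolding global_meas_def by (rule prod_mono) (auto intro: loc_nn le)
  also have "\<dots> = (\<Prod>k\<in>V. c k) * global_meas V E \<mu> (F - {e})"
    by (simp add: global_meas_def prod.distrib)
  also have "(\<Prod>k\<in>V. c k) = (\<Prod>i\<in>e. Ameas (inc_edges E i) (\<mu> i))"
  proof -
    have "(\<Prod>k\<in>V. c k) = (\<Prod>i\<in>V \<inter> e. Ameas (inc_edges E i) (\<mu> i))"
      unfolding c_def by (rule prod.inter_restrict[symmetric, OF finV])
    also have "V \<inter> e = e" using eV[OF e] by auto
    finally show ?thesis .
  qed
  finally show ?thesis .
qed

lemma energy_eq: "energy V E \<mu> t = (\<Sum>F\<in>Pow E. real (card F) * (global_meas V E \<mu> F * t ^ card F)) / partition_fn V E \<mu> t"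
  unfolding energy_def by (simp add: sum_divide_distrib)

lemma energy_mono: "0 < s \<Longrightarrow> s \<le> t \<Longrightarrow> energy V E \<mu> s \<le> energy V E \<mu> t"
  unfolding energy_eq
  using ratio_mono[of "Pow E" "global_meas V E \<mu>" s t card] finE gm_nn Z_pos[of s] Z_pos[of t]
  by (simp add: partition_fn_def)

lemma p_sum: "t > 0 \<Longrightarrow> (\<Sum>F\<in>Pow E. global_meas V E \<mu> F * t ^ card F / partition_fn V E \<mu> t) = 1"
  using Z_pos[of t] by (simp add: sum_divide_distrib[symmetric] partition_fn_def)

lemma p_nn: "t > 0 \<Longrightarrow> 0 \<le> global_meas V E \<mu> F * t ^ card F / partition_fn V E \<mu> t"
  using Z_pos[of t] gm_nn[of F] by simp

lemma energy_nonneg: "t > 0 \<Longrightarrow> 0 \<le> energy V E \<mu> t"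
  unfolding energy_def by (intro sum_nonneg mult_nonneg_nonneg p_nn) auto

lemma SZ_fin: "finite {card F |F. F \<subseteq> E \<and> global_meas V E \<mu> F > 0}"
proof -
  have "{card F |F. F \<subseteq> E \<and> global_meas V E \<mu> F > 0} \<subseteq> card ` Pow E" by auto
  then show ?thesis using finE by (meson finite_Pow_iff finite_imageI finite_subset)
qed

lemma M_ge: "F \<subseteq> E \<Longrightarrow> global_meas V E \<mu> F > 0 \<Longrightarrow> card F \<le> max_size V E \<mu>"
  unfolding max_size_def by (rule Max_ge[OF SZ_fin]) auto

lemma M_attained: "\<exists>Fs. Fs \<subseteq> E \<and> global_meas V E \<mu> Fs > 0 \<and> card Fs = max_size V E \<mu>"
proof -
  have ne: "{card F |F. F \<subseteq> E \<and> global_meas V E \<mu> F > 0} \<noteq> {}" using gm_empty by blast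
  have "max_size V E \<mu> \<in> {card F |F. F \<subseteq> E \<and> global_meas V E \<mu> F > 0}"
    unfolding max_size_def by (rule Max_in[OF SZ_fin ne])
  then show ?thesis by auto
qed

lemma energy_le_M: "t > 0 \<Longrightarrow> energy V E \<mu> t \<le> real (max_size V E \<mu>)"
proof -
  assume t: "t > 0"
  define p where "p = (\<lambda>F. global_meas V E \<mu> F * t ^ card F / partition_fn V E \<mu> t)"
  have "energy V E \<mu> t = (\<Sum>F\<in>Pow E. real (card F) * p F)" by (simp add: energy_def p_def)
  also have "\<dots> \<le> (\<Sum>F\<in>Pow E. real (max_size V E \<mu>) * p F)"
  proof (rule sum_mono)
    fix F assume F: "F \<in> Pow E"
    show "real (card F) * p F \<le> real (max_size V E \<mu>) * p F"
    proof (cases "global_meas V E \<mu> F > 0")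
      case True
      then have "card F \<le> max_size V E \<mu>" using M_ge F by auto
      then show ?thesis using p_nn[OF t, of F] by (intro mult_right_mono) (auto simp: p_def)
    next
      case False
      then have "global_meas V E \<mu> F = 0" using gm_nn[of F] by linarith
      then show ?thesis by (simp add: p_def)
    qed
  qed
  also have "\<dots> = real (max_size V E \<mu>) * (\<Sum>F\<in>Pow E. p F)" by (simp add: sum_distrib_left)
  also have "\<dots> = real (max_size V E \<mu>)" using p_sum[OF t] by (simp add: p_def)
  finally show ?thesis .
qed

lemma card_as_sum: "F \<subseteq> E \<Longrightarrow> real (card F) = (\<Sum>e\<in>E. if e \<in> F then 1 else 0)"
proof -
  assume F: "F \<subseteq> E"
  have "(\<Sum>e\<in>E. if e \<in> F then (1::real) else 0) = (\<Sum>e\<in>{e\<in>E. e \<in> F}. 1)"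
    by (rule sum.inter_filter[OF finE, symmetric])
  also have "{e\<in>E. e \<in> F} = F" using F by auto
  finally show ?thesis by simp
qed

lemma edge_bound:
  assumes e: "e \<in> E" and t: "t > 0"
  shows "(\<Sum>F\<in>{F\<in>Pow E. e \<in> F}. global_meas V E \<mu> F * t ^ card F)
     \<le> t * (\<Prod>i\<in>e. Ameas (inc_edges E i) (\<mu> i)) * (\<Sum>G\<in>{G\<in>Pow E. e \<notin> G}. global_meas V E \<mu> G * t ^ card G)"
proof -
  define A where "A = (\<Prod>i\<in>e. Ameas (inc_edges E i) (\<mu> i))"
  have A0: "A \<ge> 0" unfolding A_def using eV[OF e] loc_A_pos by (intro prod_nonneg) (auto intro: less_imp_le)
  define g where "g = (\<lambda>G. global_meas V E \<mu> G * t ^ card G)"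
  have "(\<Sum>F\<in>{F\<in>Pow E. e \<in> F}. g F) \<le> (\<Sum>F\<in>{F\<in>Pow E. e \<in> F}. t * A * g (F - {e}))"
  proof (rule sum_mono)
    fix F assume F: "F \<in> {F\<in>Pow E. e \<in> F}"
    have finF: "finite F" using F finE finite_subset by auto
    have cardF: "card F = Suc (card (F - {e}))" using F finF
      by (metis (no_types, lifting) card_Suc_Diff1 mem_Collect_eq)
    have "global_meas V E \<mu> F \<le> A * global_meas V E \<mu> (F - {e})"
      unfolding A_def by (rule gm_step) (use e F in auto)
    then have "global_meas V E \<mu> F * t ^ card F \<le> A * global_meas V E \<mu> (F - {e}) * t ^ card F"
      using t by (intro mult_right_mono) auto
    also have "\<dots> = t * A * (global_meas V E \<mu> (F - {e}) * t ^ card (F - {e}))"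
      by (simp add: cardF)
    finally show "g F \<le> t * A * g (F - {e})" by (simp add: g_def)
  qed
  also have "\<dots> = t * A * (\<Sum>F\<in>{F\<in>Pow E. e \<in> F}. g (F - {e}))" by (simp add: sum_distrib_left)
  also have "(\<Sum>F\<in>{F\<in>Pow E. e \<in> F}. g (F - {e})) = (\<Sum>G\<in>{G\<in>Pow E. e \<notin> G}. g G)"
  proof (rule sum.reindex_bij_betw)
    show "bij_betw (\<lambda>F. F - {e}) {F\<in>Pow E. e \<in> F} {G\<in>Pow E. e \<notin> G}"
    proof (rule bij_betwI[where g = "insert e"])
      show "(\<lambda>F. F - {e}) \<in> {F\<in>Pow E. e \<in> F} \<rightarrow> {G\<in>Pow E. e \<notin> G}" by auto
      show "insert e \<in> {G\<in>Pow E. e \<notin> G} \<rightarrow> {F\<in>Pow E. e \<in> F}" using e by auto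
      show "\<And>x. x \<in> {F\<in>Pow E. e \<in> F} \<Longrightarrow> insert e (x - {e}) = x" by auto
      show "\<And>y. y \<in> {G\<in>Pow E. e \<notin> G} \<Longrightarrow> insert e y - {e} = y" by auto
    qed
  qed
  finally show ?thesis by (simp add: g_def A_def)
qed

lemma energy_upper: "t > 0 \<Longrightarrow> energy V E \<mu> t \<le> t * (\<Sum>e\<in>E. \<Prod>i\<in>e. Ameas (inc_edges E i) (\<mu> i))"
proof -
  assume t: "t > 0"
  define p where "p = (\<lambda>F. global_meas V E \<mu> F * t ^ card F / partition_fn V E \<mu> t)"
  define Z where "Z = partition_fn V E \<mu> t"
  have Zp: "Z > 0" using Z_pos[OF t] by (simp add: Z_def)
  have "energy V E \<mu> t = (\<Sum>F\<in>Pow E. real (card F) * p F)" by (simp add: energy_def p_def)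
  also have "\<dots> = (\<Sum>F\<in>Pow E. \<Sum>e\<in>E. if e \<in> F then p F else 0)"
  proof (rule sum.cong[OF refl])
    fix F assume "F \<in> Pow E"
    then have "real (card F) * p F = (\<Sum>e\<in>E. (if e \<in> F then 1 else 0) * p F)"
      by (simp add: card_as_sum sum_distrib_right)
    also have "\<dots> = (\<Sum>e\<in>E. if e \<in> F then p F else 0)" by (rule sum.cong) auto
    finally show "real (card F) * p F = (\<Sum>e\<in>E. if e \<in> F then p F else 0)" .
  qed
  also have "\<dots> = (\<Sum>e\<in>E. \<Sum>F\<in>Pow E. if e \<in> F then p F else 0)" by (rule sum.swap)
  also have "\<dots> = (\<Sum>e\<in>E. \<Sum>F\<in>{F\<in>Pow E. e \<in> F}. p F)"
  proof (rule sum.cong[OF refl])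
    fix e show "(\<Sum>F\<in>Pow E. if e \<in> F then p F else 0) = (\<Sum>F\<in>{F\<in>Pow E. e \<in> F}. p F)"
      by (rule sum.inter_filter[symmetric]) (use finE in simp)
  qed
  also have "\<dots> \<le> (\<Sum>e\<in>E. t * (\<Prod>i\<in>e. Ameas (inc_edges E i) (\<mu> i)))"
  proof (rule sum_mono)
    fix e assume e: "e \<in> E"
    define A where "A = (\<Prod>i\<in>e. Ameas (inc_edges E i) (\<mu> i))"
    have A0: "A \<ge> 0" unfolding A_def using eV[OF e] loc_A_pos by (intro prod_nonneg) (auto intro: less_imp_le)
    have "(\<Sum>F\<in>{F\<in>Pow E. e \<in> F}. p F) = (\<Sum>F\<in>{F\<in>Pow E. e \<in> F}. global_meas V E \<mu> F * t ^ card F) / Z"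
      by (simp add: p_def Z_def sum_divide_distrib)
    also have "\<dots> \<le> t * A * (\<Sum>G\<in>{G\<in>Pow E. e \<notin> G}. global_meas V E \<mu> G * t ^ card G) / Z"
      using edge_bound[OF e t] Zp by (simp add: A_def divide_right_mono)
    also have "\<dots> \<le> t * A * Z / Z"
    proof -
      have "(\<Sum>G\<in>{G\<in>Pow E. e \<notin> G}. global_meas V E \<mu> G * t ^ card G) \<le> Z"
        unfolding Z_def partition_fn_def
        by (rule sum_mono2) (use finE gm_nn t in auto)
      then show ?thesis using A0 t Zp by (intro divide_right_mono mult_left_mono) auto
    qed
    also have "\<dots> = t * A" using Zp by simp
    finally show "(\<Sum>F\<in>{F\<in>Pow E. e \<in> F}. p F) \<le> t * (\<Prod>i\<in>e. Ameas (inc_edges E i) (\<mu> i))"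
      by (simp add: A_def)
  qed
  also have "\<dots> = t * (\<Sum>e\<in>E. \<Prod>i\<in>e. Ameas (inc_edges E i) (\<mu> i))" by (simp add: sum_distrib_left)
  finally show ?thesis .
qed

lemma term_le_Z:
  assumes F: "F \<subseteq> E" and t: "t > 0"
  shows "global_meas V E \<mu> F * t ^ card F \<le> partition_fn V E \<mu> t"
proof -
  have fin: "finite (Pow E)" using finE by simp
  have "partition_fn V E \<mu> t = global_meas V E \<mu> F * t ^ card F
      + (\<Sum>G\<in>Pow E - {F}. global_meas V E \<mu> G * t ^ card G)"
    unfolding partition_fn_def by (rule sum.remove[OF fin]) (use F in simp)
  moreover have "(\<Sum>G\<in>Pow E - {F}. global_meas V E \<mu> G * t ^ card G) \<ge> 0"
    using gm_nn t by (intro sum_nonneg) simp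
  ultimately show ?thesis by simp
qed

lemma gibbs:
  assumes t: "t > 0"
  shows "ln (partition_fn V E \<mu> t) - ln (partition_fn V E \<mu> 1) \<le> energy V E \<mu> t * ln t"
proof -
  define Zt where "Zt = partition_fn V E \<mu> t"
  define Z1 where "Z1 = partition_fn V E \<mu> 1"
  have Ztp: "Zt > 0" using Z_pos[OF t] by (simp add: Zt_def)
  have Z1p: "Z1 > 0" using Z_pos[of 1] by (simp add: Z1_def)
  define p where "p = (\<lambda>F. global_meas V E \<mu> F * t ^ card F / Zt)"
  have pnn: "\<And>F. p F \<ge> 0" using p_nn[OF t] by (simp add: p_def Zt_def)
  have psum: "(\<Sum>F\<in>Pow E. p F) = 1" using p_sum[OF t] by (simp add: p_def Zt_def)
  have en: "energy V E \<mu> t = (\<Sum>F\<in>Pow E. real (card F) * p F)" by (simp add: energy_def p_def Zt_def)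
  have Z1eq: "Z1 = (\<Sum>F\<in>Pow E. global_meas V E \<mu> F)" by (simp add: Z1_def partition_fn_def)
  have "(\<Sum>F\<in>Pow E. p F * ln (Zt / (Z1 * t ^ card F))) \<le> (\<Sum>F\<in>Pow E. p F * (Zt / (Z1 * t ^ card F) - 1))"
  proof (rule sum_mono)
    fix F :: "'v set set"
    have "ln (Zt / (Z1 * t ^ card F)) \<le> Zt / (Z1 * t ^ card F) - 1"
      using Ztp Z1p t by (intro ln_le_minus_one) simp
    then show "p F * ln (Zt / (Z1 * t ^ card F)) \<le> p F * (Zt / (Z1 * t ^ card F) - 1)"
      using pnn by (intro mult_left_mono) auto
  qed
  also have "\<dots> = (\<Sum>F\<in>Pow E. global_meas V E \<mu> F / Z1 - p F)"
  proof (rule sum.cong[OF refl])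
    fix F :: "'v set set" show "p F * (Zt / (Z1 * t ^ card F) - 1) = global_meas V E \<mu> F / Z1 - p F"
      using Ztp Z1p t by (simp add: p_def field_simps)
  qed
  also have "\<dots> = 0"
    using psum Z1p by (simp add: sum_subtractf sum_divide_distrib[symmetric] Z1eq[symmetric])
  finally have le0: "(\<Sum>F\<in>Pow E. p F * ln (Zt / (Z1 * t ^ card F))) \<le> 0" .
  have "(\<Sum>F\<in>Pow E. p F * ln (Zt / (Z1 * t ^ card F)))
      = (\<Sum>F\<in>Pow E. p F * (ln Zt - ln Z1) - ln t * (real (card F) * p F))"
  proof (rule sum.cong[OF refl])
    fix F :: "'v set set"
    have L: "ln (Zt / (Z1 * t ^ card F)) = ln Zt - ln Z1 - real (card F) * ln t"
      using Ztp Z1p t by (simp add: ln_div ln_mult ln_realpow)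
    show "p F * ln (Zt / (Z1 * t ^ card F)) = p F * (ln Zt - ln Z1) - ln t * (real (card F) * p F)"
      unfolding L by (simp add: algebra_simps)
  qed
  also have "\<dots> = (ln Zt - ln Z1) * (\<Sum>F\<in>Pow E. p F) - ln t * energy V E \<mu> t"
    by (simp add: sum_subtractf sum_distrib_left sum_distrib_right en mult.commute)
  finally show ?thesis using le0 psum by (simp add: Zt_def Z1_def mult.commute)
qed

lemma gm_lower:
  assumes F: "F \<subseteq> E" and pos: "global_meas V E \<mu> F > 0"
  shows "(\<Prod>i\<in>V. min_meas (inc_edges E i) (\<mu> i)) \<le> global_meas V E \<mu> F"
  unfolding global_meas_def
proof (rule prod_mono)
  fix i assume i: "i \<in> V"
  have "\<mu> i (F \<inter> inc_edges E i) \<noteq> 0"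
    using pos i finV unfolding global_meas_def by (metis prod_zero_iff less_irrefl)
  then have p: "\<mu> i (F \<inter> inc_edges E i) > 0" using loc_nn[OF i, of "F \<inter> inc_edges E i"] by auto
  show "0 \<le> min_meas (inc_edges E i) (\<mu> i) \<and> min_meas (inc_edges E i) (\<mu> i) \<le> \<mu> i (F \<inter> inc_edges E i)"
    using loc_min_pos[OF i] loc_bounds(1)[OF i _ p] by auto
qed

lemma gm_upper:
  shows "global_meas V E \<mu> F \<le> (\<Prod>i\<in>V. max_meas (inc_edges E i) (\<mu> i))"
  unfolding global_meas_def
proof (rule prod_mono)
  fix i assume i: "i \<in> V"
  have nn: "0 \<le> \<mu> i (F \<inter> inc_edges E i)" using loc_nn[OF i] by auto
  have "\<mu> i (F \<inter> inc_edges E i) \<le> max_meas (inc_edges E i) (\<mu> i)"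
  proof (cases "\<mu> i (F \<inter> inc_edges E i) > 0")
    case True then show ?thesis using loc_bounds(2)[OF i _ True] by auto
  next
    case False then show ?thesis using loc_max_pos[OF i] by linarith
  qed
  then show "0 \<le> \<mu> i (F \<inter> inc_edges E i) \<and> \<mu> i (F \<inter> inc_edges E i) \<le> max_meas (inc_edges E i) (\<mu> i)"
    using nn by auto
qed

lemma energy_lower:
  assumes t: "t > 1"
  shows "real (max_size V E \<mu>) - (real (card E) * ln 2 + (\<Sum>i\<in>V. ln (Ameas (inc_edges E i) (\<mu> i)))) / ln t
    \<le> energy V E \<mu> t"
proof -
  define M where "M = real (max_size V E \<mu>)"
  define mn where "mn = (\<lambda>i. min_meas (inc_edges E i) (\<mu> i))"
  define mx where "mx = (\<lambda>i. max_meas (inc_edges E i) (\<mu> i))"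
  define C where "C = real (card E) * ln 2 + (\<Sum>i\<in>V. ln (Ameas (inc_edges E i) (\<mu> i)))"
  have t0: "t > 0" using t by simp
  have lt: "ln t > 0" using t by simp
  obtain Fs where Fs: "Fs \<subseteq> E" "global_meas V E \<mu> Fs > 0" "card Fs = max_size V E \<mu>"
    using M_attained by blast
  have mnp: "\<And>i. i \<in> V \<Longrightarrow> mn i > 0" using loc_min_pos by (simp add: mn_def)
  have mxp: "\<And>i. i \<in> V \<Longrightarrow> mx i > 0" using loc_max_pos by (simp add: mx_def)
  have Pmn: "(\<Prod>i\<in>V. mn i) > 0" using mnp by (intro prod_pos) auto
  have Pmx: "(\<Prod>i\<in>V. mx i) > 0" using mxp by (intro prod_pos) auto
  have "(\<Prod>i\<in>V. mn i) * t ^ max_size V E \<mu> \<le> global_meas V E \<mu> Fs * t ^ max_size V E \<mu>"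
    using gm_lower[OF Fs(1,2)] t0 by (intro mult_right_mono) (auto simp: mn_def)
  also have "\<dots> \<le> partition_fn V E \<mu> t" using term_le_Z[OF Fs(1) t0] Fs(3) by simp
  finally have "ln ((\<Prod>i\<in>V. mn i) * t ^ max_size V E \<mu>) \<le> ln (partition_fn V E \<mu> t)"
    using Pmn t0 Z_pos[OF t0] by (subst ln_le_cancel_iff) auto
  moreover have "ln ((\<Prod>i\<in>V. mn i) * t ^ max_size V E \<mu>) = (\<Sum>i\<in>V. ln (mn i)) + M * ln t"
  proof -
    have "ln (\<Prod>i\<in>V. mn i) = (\<Sum>i\<in>V. ln (mn i))" by (rule ln_prod[OF finV]) (use mnp in force)
    then show ?thesis using Pmn t0 by (simp add: ln_mult ln_realpow M_def)
  qed
  ultimately have lowZ: "(\<Sum>i\<in>V. ln (mn i)) + M * ln t \<le> ln (partition_fn V E \<mu> t)" by simp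
  have "partition_fn V E \<mu> 1 = (\<Sum>F\<in>Pow E. global_meas V E \<mu> F)" by (simp add: partition_fn_def)
  also have "\<dots> \<le> (\<Sum>F\<in>Pow E. (\<Prod>i\<in>V. mx i))" by (rule sum_mono) (simp add: gm_upper mx_def)
  also have "\<dots> = 2 ^ card E * (\<Prod>i\<in>V. mx i)" using finE by (simp add: card_Pow)
  finally have "ln (partition_fn V E \<mu> 1) \<le> ln (2 ^ card E * (\<Prod>i\<in>V. mx i))"
    using Z_pos[of 1] by (subst ln_le_cancel_iff) auto
  moreover have "ln (2 ^ card E * (\<Prod>i\<in>V. mx i)) = real (card E) * ln 2 + (\<Sum>i\<in>V. ln (mx i))"
  proof -
    have "ln (\<Prod>i\<in>V. mx i) = (\<Sum>i\<in>V. ln (mx i))" by (rule ln_prod[OF finV]) (use mxp in force)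
    then show ?thesis using Pmx by (simp add: ln_mult ln_realpow)
  qed
  ultimately have upZ: "ln (partition_fn V E \<mu> 1) \<le> real (card E) * ln 2 + (\<Sum>i\<in>V. ln (mx i))" by simp
  have sumA: "(\<Sum>i\<in>V. ln (Ameas (inc_edges E i) (\<mu> i))) = (\<Sum>i\<in>V. ln (mx i)) - (\<Sum>i\<in>V. ln (mn i))"
  proof -
    have "(\<Sum>i\<in>V. ln (Ameas (inc_edges E i) (\<mu> i))) = (\<Sum>i\<in>V. ln (mx i) - ln (mn i))"
    proof (rule sum.cong[OF refl])
      fix i assume "i \<in> V"
      then show "ln (Ameas (inc_edges E i) (\<mu> i)) = ln (mx i) - ln (mn i)"
      proof -
        assume i: "i \<in> V"
        have "mx i \<noteq> 0" "mn i \<noteq> 0" using mnp[OF i] mxp[OF i] by auto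
        then show ?thesis by (simp add: Ameas_def ln_div mx_def mn_def)
      qed
    qed
    then show ?thesis by (simp add: sum_subtractf)
  qed
  have "M * ln t - C \<le> energy V E \<mu> t * ln t"
    using gibbs[OF t0] lowZ upZ sumA by (simp add: C_def)
  then have "(M * ln t - C) / ln t \<le> energy V E \<mu> t" using lt by (simp add: pos_divide_le_eq)
  moreover have "(M * ln t - C) / ln t = M - C / ln t" using lt by (simp add: field_simps)
  ultimately show ?thesis by (simp add: M_def C_def)
qed

end


theorem mainTheorem8:
  fixes V :: "'v set" and E :: "'v set set" and \<mu> :: "'v \<Rightarrow> 'v set set \<Rightarrow> real"
  assumes "cavity_monotone_network V E \<mu>"
  shows "mono_on {0<..} (energy V E \<mu>) \<and>
         (energy V E \<mu> \<longlongrightarrow> 0) (at_right 0) \<and>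
         (energy V E \<mu> \<longlongrightarrow> real (max_size V E \<mu>)) at_top \<and>
         (\<forall>t>0. energy V E \<mu> t \<le>
           t * (\<Sum>e\<in>E. \<Prod>i\<in>e. Ameas (inc_edges E i) (\<mu> i))) \<and>
         (\<forall>t>1. energy V E \<mu> t \<ge> real (max_size V E \<mu>) -
           (real (card E) * ln 2 + (\<Sum>i\<in>V. ln (Ameas (inc_edges E i) (\<mu> i)))) / ln t)"
proof -
  note cm = assms
  define C where "C = (\<Sum>e\<in>E. \<Prod>i\<in>e. Ameas (inc_edges E i) (\<mu> i))"
  define C' where "C' = real (card E) * ln 2 + (\<Sum>i\<in>V. ln (Ameas (inc_edges E i) (\<mu> i)))"
  define M where "M = real (max_size V E \<mu>)"
  have mono: "mono_on {0<..} (energy V E \<mu>)"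
    by (rule mono_onI) (auto intro: energy_mono[OF cm])
  have up: "\<forall>t>0. energy V E \<mu> t \<le> t * C"
    using energy_upper[OF cm] by (simp add: C_def)
  have low: "\<forall>t>1. energy V E \<mu> t \<ge> M - C' / ln t"
    using energy_lower[OF cm] by (simp add: M_def C'_def)
  have lim0: "(energy V E \<mu> \<longlongrightarrow> 0) (at_right 0)"
  proof (rule tendsto_sandwich[where f = "\<lambda>_. 0" and h = "\<lambda>t. t * C"])
    show "\<forall>\<^sub>F t in at_right 0. 0 \<le> energy V E \<mu> t"
      using eventually_at_right_less[of "0::real"] by (rule eventually_mono) (rule energy_nonneg[OF cm])
    show "\<forall>\<^sub>F t in at_right 0. energy V E \<mu> t \<le> t * C"
      using eventually_at_right_less[of "0::real"] by (rule eventually_mono) (use up in auto)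
    show "((\<lambda>_. 0::real) \<longlongrightarrow> 0) (at_right 0)" by simp
    have "((\<lambda>t::real. t * C) \<longlongrightarrow> 0 * C) (at_right 0)" by (intro tendsto_intros)
    then show "((\<lambda>t::real. t * C) \<longlongrightarrow> 0) (at_right 0)" by simp
  qed
  have limtop: "(energy V E \<mu> \<longlongrightarrow> M) at_top"
  proof (rule tendsto_sandwich[where f = "\<lambda>t. M - C' / ln t" and h = "\<lambda>_. M"])
    show "\<forall>\<^sub>F t in at_top. M - C' / ln t \<le> energy V E \<mu> t"
      using eventually_gt_at_top[of "1::real"] by (rule eventually_mono) (use low in auto)
    show "\<forall>\<^sub>F t in at_top. energy V E \<mu> t \<le> M"
      using eventually_gt_at_top[of "0::real"] by (rule eventually_mono) (use energy_le_M[OF cm] in \<open>auto simp: M_def\<close>)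
    show "((\<lambda>_. M) \<longlongrightarrow> M) at_top" by simp
    have "((\<lambda>t. C' / ln t) \<longlongrightarrow> 0) at_top"
      by (rule tendsto_divide_0[OF tendsto_const filterlim_at_top_imp_at_infinity[OF ln_at_top]])
    then have "((\<lambda>t. M - C' / ln t) \<longlongrightarrow> M - 0) at_top" by (intro tendsto_intros)
    then show "((\<lambda>t. M - C' / ln t) \<longlongrightarrow> M) at_top" by simp
  qed
  show ?thesis using mono lim0 limtop up low by (simp add: C_def C'_def M_def)
qed

end
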